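(* Let $\Lambda_1$ be a finite irreducible graph with at least two vertices, and let $\Lambda_2$ and $\Gamma$ be finite simple graphs. Suppose that (1) there is an injective homomorphism $\psi\colon A(\Lambda_1*\Lambda_2)\hookrightarrow A(\Gamma)$ satisfying condition (KK), and (2) for $i=1,2$ there are full embeddings $\iota_i\colon\Lambda_i\to\Gamma$ with $\iota_i(V(\Lambda_i))\subset\mathrm{supp}(\psi_i)$, where $\psi_i$ is the restriction of $\psi$ to $A(\Lambda_i)$. Then the map $\iota\colon\Lambda_1*\Lambda_2\to\Gamma$ defined by $\iota(v)=\iota_1(v)$ for $v\in V(\Lambda_1)$ and $\iota(v)=\iota_2(v)$ for $v\in V(\Lambda_2)$ is a full embedding with $\iota(V(\Lambda_1*\Lambda_2))\subset\mathrm{supp}(\psi)$.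
   Context: All graphs are simple. $A(\Gamma) = \langle V(\Gamma) \mid uv=vu \text{ whenever } \{u,v\}\in E(\Gamma)\rangle$ is the right-angled Artin group. A graph embedding is an injective vertex map preserving adjacency; it is full if it also preserves non-adjacency. The join $\Lambda_1*\Lambda_2$ is obtained from the disjoint union by joining every vertex of $\Lambda_1$ to every vertex of $\Lambda_2$; $A(\Lambda_1*\Lambda_2)=A(\Lambda_1)\times A(\Lambda_2)$. A graph is irreducible if it is not the join of two non-empty graphs. The support $\mathrm{supp}(g)$ of $g\in A(\Gamma)$ is the set of vertices $v$ such that $v$ or $v^{-1}$ occurs in a (equivalently, any) shortest word representing $g$. For a homomorphism $\psi\colon A(\Lambda)\to A(\Gamma)$, $\mathrm{supp}(\psi)=\bigcup_{v\in V(\Lambda)}\mathrm{supp}(\psi(v))$. A homomorphism $\psi$ satisfies condition (KK) if for every $v\in V(\Lambda)$ the set $\mathrm{supp}(\psi(v))$ consists of mutually adjacent vertices of $\Gamma$. *)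

theory Defs
  imports Main
begin

definition simple_graph :: "'a set \<Rightarrow> ('a \<times> 'a) set \<Rightarrow> bool" where
  "simple_graph V E \<longleftrightarrow> E \<subseteq> V \<times> V \<and> sym E \<and> irrefl E"

definition join_vertices :: "'a set \<Rightarrow> 'b set \<Rightarrow> ('a + 'b) set" where
  "join_vertices V1 V2 = Inl ` V1 \<union> Inr ` V2"

definition join_edges ::
  "'a set \<Rightarrow> ('a \<times> 'a) set \<Rightarrow> 'b set \<Rightarrow> ('b \<times> 'b) set \<Rightarrow> (('a + 'b) \<times> ('a + 'b)) set" where
  "join_edges V1 E1 V2 E2 =
     {(Inl x, Inl y) | x y. (x, y) \<in> E1} \<union> {(Inr x, Inr y) | x y. (x, y) \<in> E2}
     \<union> {(Inl x, Inr y) | x y. x \<in> V1 \<and> y \<in> V2} \<union> {(Inr y, Inl x) | x y. x \<in> V1 \<and> y \<in> V2}"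

definition irreducible_graph :: "'a set \<Rightarrow> ('a \<times> 'a) set \<Rightarrow> bool" where
  "irreducible_graph V E \<longleftrightarrow>
     \<not> (\<exists>A B. A \<noteq> {} \<and> B \<noteq> {} \<and> A \<union> B = V \<and> A \<inter> B = {} \<and>
            (\<forall>a\<in>A. \<forall>b\<in>B. (a, b) \<in> E))"

definition full_embedding ::
  "'a set \<Rightarrow> ('a \<times> 'a) set \<Rightarrow> 'b set \<Rightarrow> ('b \<times> 'b) set \<Rightarrow> ('a \<Rightarrow> 'b) \<Rightarrow> bool" where
  "full_embedding V E W F \<iota> \<longleftrightarrow>
     inj_on \<iota> V \<and> \<iota> ` V \<subseteq> W \<and>
     (\<forall>u\<in>V. \<forall>v\<in>V. (u, v) \<in> E \<longleftrightarrow> (\<iota> u, \<iota> v) \<in> F)"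

text \<open>Elements of A(\<Gamma>) are represented by words in the generators and their inverses:
  a letter (v, True) stands for v, (v, False) for v^-1.\<close>

type_synonym 'a word = "('a \<times> bool) list"

definition words_on :: "'a set \<Rightarrow> 'a word set" where
  "words_on V = {w. \<forall>l\<in>set w. fst l \<in> V}"

inductive raag_eq :: "('a \<times> 'a) set \<Rightarrow> 'a word \<Rightarrow> 'a word \<Rightarrow> bool" for E where
  refl: "raag_eq E w w"
| sym: "raag_eq E w w' \<Longrightarrow> raag_eq E w' w"
| trans: "raag_eq E u v \<Longrightarrow> raag_eq E v w \<Longrightarrow> raag_eq E u w"
| cancel: "raag_eq E (u @ [(x, b), (x, \<not> b)] @ w) (u @ w)"
| commute: "(x, y) \<in> E \<Longrightarrow> raag_eq E (u @ [(x, b), (y, c)] @ w) (u @ [(y, c), (x, b)] @ w)"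

definition inv_word :: "'a word \<Rightarrow> 'a word" where
  "inv_word w = rev (map (\<lambda>(x, b). (x, \<not> b)) w)"

text \<open>A homomorphism A(\<Lambda>) \<rightarrow> A(\<Gamma>) is determined by the images of the generators; it is
  given by a word f v representing \<psi>(v). Its action on words:\<close>

definition hom_ext :: "('a \<Rightarrow> 'c word) \<Rightarrow> 'a word \<Rightarrow> 'c word" where
  "hom_ext f w = concat (map (\<lambda>(v, b). if b then f v else inv_word (f v)) w)"

definition raag_hom ::
  "'a set \<Rightarrow> ('a \<times> 'a) set \<Rightarrow> 'c set \<Rightarrow> ('c \<times> 'c) set \<Rightarrow> ('a \<Rightarrow> 'c word) \<Rightarrow> bool" where
  "raag_hom V E W F f \<longleftrightarrow>
     (\<forall>v\<in>V. f v \<in> words_on W) \<and>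
     (\<forall>u\<in>V. \<forall>v\<in>V. (u, v) \<in> E \<longrightarrow> raag_eq F (f u @ f v) (f v @ f u))"

definition raag_hom_injective ::
  "'a set \<Rightarrow> ('a \<times> 'a) set \<Rightarrow> 'c set \<Rightarrow> ('c \<times> 'c) set \<Rightarrow> ('a \<Rightarrow> 'c word) \<Rightarrow> bool" where
  "raag_hom_injective V E W F f \<longleftrightarrow>
     raag_hom V E W F f \<and>
     (\<forall>w\<in>words_on V. raag_eq F (hom_ext f w) [] \<longrightarrow> raag_eq E w [])"

definition raag_supp :: "'a set \<Rightarrow> ('a \<times> 'a) set \<Rightarrow> 'a word \<Rightarrow> 'a set" where
  "raag_supp V E w =
     {x. \<exists>w'\<in>words_on V. raag_eq E w' w \<and>
           (\<forall>w''\<in>words_on V. raag_eq E w'' w \<longrightarrow> length w' \<le> length w'') \<and>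
           x \<in> fst ` set w'}"

definition hom_supp ::
  "'a set \<Rightarrow> 'c set \<Rightarrow> ('c \<times> 'c) set \<Rightarrow> ('a \<Rightarrow> 'c word) \<Rightarrow> 'c set" where
  "hom_supp V W F f = (\<Union>v\<in>V. raag_supp W F (f v))"

definition KK :: "'a set \<Rightarrow> 'c set \<Rightarrow> ('c \<times> 'c) set \<Rightarrow> ('a \<Rightarrow> 'c word) \<Rightarrow> bool" where
  "KK V W F f \<longleftrightarrow>
     (\<forall>v\<in>V. \<forall>x\<in>raag_supp W F (f v). \<forall>y\<in>raag_supp W F (f v). x \<noteq> y \<longrightarrow> (x, y) \<in> F)"

end

theory Submission
  imports Defs
begin

type_synonym m2 = "int \<times> int \<times> int \<times> int"

fun mmul :: "m2 \<Rightarrow> m2 \<Rightarrow> m2" where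
  "mmul (a,b,c,d) (e,f,g,h) = (a*e+b*g, a*f+b*h, c*e+d*g, c*f+d*h)"

lemma mmul_assoc: "mmul (mmul p q) r = mmul p (mmul q r)"
  by (cases p; cases q; cases r) (simp add: algebra_simps)

lemma mmul_I1[simp]: "mmul (1,0,0,1) p = p"
  by (cases p) simp

definition lt :: "'c \<Rightarrow> 'c \<Rightarrow> 'c \<times> bool \<Rightarrow> m2" where
  "lt x y l = (if fst l = x then (if snd l then (1,2,0,1) else (1,-2,0,1))
              else if fst l = y then (if snd l then (1,0,2,1) else (1,0,-2,1))
              else (1,0,0,1))"

fun ev :: "'c \<Rightarrow> 'c \<Rightarrow> 'c word \<Rightarrow> m2" where
  "ev x y [] = (1,0,0,1)"
| "ev x y (l # w) = mmul (lt x y l) (ev x y w)"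

lemma ev_append: "ev x y (u @ v) = mmul (ev x y u) (ev x y v)"
  by (induction u) (auto simp: mmul_assoc)

lemma ev_inv:
  assumes "x \<noteq> y" "(x,y) \<notin> F" "(y,x) \<notin> F" "raag_eq F w1 w2"
  shows "ev x y w1 = ev x y w2"
  using assms(4)
proof (induction rule: raag_eq.induct)
  case (cancel u x' b w)
  have "mmul (lt x y (x',b)) (lt x y (x',\<not>b)) = (1,0,0,1)" by (simp add: lt_def)
  then have "mmul (lt x y (x',b)) (mmul (lt x y (x',\<not>b)) z) = z" for z
    by (metis mmul_I1 mmul_assoc)
  then show ?case by (simp add: ev_append)
next
  case (commute p q u b c w)
  have "mmul (lt x y (p,b)) (lt x y (q,c)) = mmul (lt x y (q,c)) (lt x y (p,b))"
    using assms commute.hyps by (auto simp: lt_def)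
  then have "mmul (lt x y (p,b)) (mmul (lt x y (q,c)) z) = mmul (lt x y (q,c)) (mmul (lt x y (p,b)) z)" for z
    by (metis mmul_assoc)
  then show ?case by (simp add: ev_append)
qed auto

definition ex :: "'c \<Rightarrow> 'c word \<Rightarrow> int" where
  "ex x w = sum_list (map (\<lambda>(p,b). if p = x then (if b then 1 else -1) else 0) w)"

lemma ex_simps[simp]: "ex x [] = 0" "ex x (l # w) = (if fst l = x then (if snd l then 1 else -1) else 0) + ex x w"
  by (auto simp: ex_def split: prod.splits)

lemma ev_noy: "y \<notin> fst ` set w \<Longrightarrow> x \<noteq> y \<Longrightarrow> ev x y w = (1, 2 * ex x w, 0, 1)"
  by (induction w) (auto simp: lt_def algebra_simps)

lemma ev_nox: "x \<notin> fst ` set w \<Longrightarrow> x \<noteq> y \<Longrightarrow> ev x y w = (1, 0, 2 * ex y w, 1)"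
  by (induction w) (auto simp: lt_def algebra_simps)

lemma ex_nonneg: "(x,False) \<notin> set w \<Longrightarrow> ex x w \<ge> 0"
  by (induction w) auto

lemma ex_nonpos: "(x,True) \<notin> set w \<Longrightarrow> ex x w \<le> 0"
  by (induction w) auto

lemma ex_pos: "(x,False) \<notin> set w \<Longrightarrow> x \<in> fst ` set w \<Longrightarrow> ex x w > 0"
proof (induction w)
  case (Cons l w)
  then show ?case using ex_nonneg[of x w] by (cases l) (auto split: if_splits)
qed auto

lemma ex_neg: "(x,True) \<notin> set w \<Longrightarrow> x \<in> fst ` set w \<Longrightarrow> ex x w < 0"
proof (induction w)
  case (Cons l w)
  then show ?case using ex_nonpos[of x w] by (cases l) (auto split: if_splits)
qed auto

lemma split_pair:
  "(x,b) \<in> set w \<Longrightarrow> (x, \<not> b) \<in> set w \<Longrightarrow>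
   \<exists>u1 c u2 u3. w = u1 @ [(x,c)] @ u2 @ [(x,\<not> c)] @ u3 \<and> x \<notin> fst ` set u2"
proof (induction w arbitrary: b)
  case Nil then show ?case by simp
next
  case (Cons l w0)
  show ?case
  proof (cases "fst l = x")
    case False
    then have "(x,b) \<in> set w0" "(x,\<not>b) \<in> set w0" using Cons.prems by auto
    from Cons.IH[OF this] obtain u1 c u2 u3 where
      "w0 = u1 @ [(x,c)] @ u2 @ [(x,\<not> c)] @ u3 \<and> x \<notin> fst ` set u2" by blast
    then have "l # w0 = (l # u1) @ [(x,c)] @ u2 @ [(x,\<not> c)] @ u3 \<and> x \<notin> fst ` set u2" by simp
    then show ?thesis by blast
  next
    case True
    then obtain d where l: "l = (x,d)" by (cases l) auto
    have "(x, \<not> d) \<in> set w0" using Cons.prems l by (cases b; cases d) auto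
    then have "\<exists>z\<in>set w0. fst z = x" by force
    from split_list_first_prop[OF this] obtain u2 z u3 where
      sp: "w0 = u2 @ z # u3" "fst z = x" "\<forall>q\<in>set u2. \<not> fst q = x"
      by blast
    obtain c where z: "z = (x,c)" using sp by (cases z) auto
    show ?thesis
    proof (cases "c = d")
      case False
      then have "l # w0 = [] @ [(x,d)] @ u2 @ [(x,\<not> d)] @ u3 \<and> x \<notin> fst ` set u2"
        using sp z l by auto
      then show ?thesis by blast
    next
      case True
      have "(x,d) \<in> set w0" using sp z True by auto
      from Cons.IH[OF this \<open>(x,\<not>d) \<in> set w0\<close>] obtain u1 c u2 u3 where
        "w0 = u1 @ [(x,c)] @ u2 @ [(x,\<not> c)] @ u3 \<and> x \<notin> fst ` set u2" by blast
      then have "l # w0 = (l # u1) @ [(x,c)] @ u2 @ [(x,\<not> c)] @ u3 \<and> x \<notin> fst ` set u2" by simp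
      then show ?thesis by blast
    qed
  qed
qed

lemma move:
  "\<forall>l\<in>set u2. (x, fst l) \<in> F \<Longrightarrow> raag_eq F (u1 @ (x,b) # u2 @ v) (u1 @ u2 @ (x,b) # v)"
proof (induction u2 arbitrary: u1)
  case Nil then show ?case by (simp add: raag_eq.refl)
next
  case (Cons l u2)
  obtain q c where l: "l = (q,c)" by (cases l)
  have "(x,q) \<in> F" using Cons.prems l by auto
  from raag_eq.commute[OF this, of u1 b c "u2 @ v"]
  have 1: "raag_eq F (u1 @ (x,b) # (l # u2) @ v) ((u1 @ [l]) @ (x,b) # u2 @ v)" using l by simp
  have 2: "raag_eq F ((u1 @ [l]) @ (x,b) # u2 @ v) ((u1 @ [l]) @ u2 @ (x,b) # v)"
    using Cons.IH[of "u1 @ [l]"] Cons.prems by simp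
  show ?case using raag_eq.trans[OF 1 2] by simp
qed

lemma supp_word:
  assumes "w' \<in> words_on W" "raag_eq F w' g" "\<forall>w''\<in>words_on W. raag_eq F w'' g \<longrightarrow> length w' \<le> length w''"
  shows "fst ` set w' \<subseteq> raag_supp W F g"
  using assms unfolding raag_supp_def by blast

lemma key_one:
  assumes x: "x \<in> raag_supp W F g"
    and cl: "\<forall>p\<in>raag_supp W F g. \<forall>q\<in>raag_supp W F g. p \<noteq> q \<longrightarrow> (p, q) \<in> F"
    and y: "y \<noteq> x" "(x,y) \<notin> F"
  shows "\<exists>w'. raag_eq F w' g \<and> y \<notin> fst ` set w' \<and> ex x w' \<noteq> 0"
proof -
  from x obtain w' where w': "w' \<in> words_on W" "raag_eq F w' g"
    "\<forall>w''\<in>words_on W. raag_eq F w'' g \<longrightarrow> length w' \<le> length w''" "x \<in> fst ` set w'"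
    unfolding raag_supp_def by blast
  have sub: "fst ` set w' \<subseteq> raag_supp W F g" using supp_word[OF w'(1-3)] .
  have ny: "y \<notin> fst ` set w'"
  proof
    assume "y \<in> fst ` set w'"
    then have "y \<in> raag_supp W F g" using sub by blast
    then have "(x,y) \<in> F" using cl x y(1) by metis
    then show False using y(2) by simp
  qed
  have adj: "(x, fst l) \<in> F" if "l \<in> set w'" "fst l \<noteq> x" for l
  proof -
    have "fst l \<in> raag_supp W F g" using sub that(1) by blast
    then show ?thesis using cl x that(2) by metis
  qed
  have "ex x w' \<noteq> 0"
  proof
    assume e: "ex x w' = 0"
    have bt1: "(x,True) \<in> set w'"
    proof (rule ccontr)
      assume "(x,True) \<notin> set w'"
      from ex_neg[OF this w'(4)] show False using e by simp
    qed
    have bt2: "(x,\<not>True) \<in> set w'"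
    proof (rule ccontr)
      assume "(x,\<not>True) \<notin> set w'"
      then have "(x,False) \<notin> set w'" by simp
      from ex_pos[OF this w'(4)] show False using e by simp
    qed
    from split_pair[OF bt1 bt2] obtain u1 c u2 u3 where
      sp: "w' = u1 @ [(x,c)] @ u2 @ [(x,\<not> c)] @ u3" "x \<notin> fst ` set u2" by blast
    have a2: "\<forall>l\<in>set u2. (x, fst l) \<in> F"
    proof
      fix l assume l: "l \<in> set u2"
      then have "l \<in> set w'" using sp(1) by simp
      moreover have "fst l \<noteq> x" using l sp(2) by force
      ultimately show "(x, fst l) \<in> F" by (rule adj)
    qed
    have m: "raag_eq F (u1 @ (x,c) # u2 @ ((x,\<not>c) # u3)) (u1 @ u2 @ (x,c) # ((x,\<not>c) # u3))"
      using move[OF a2] .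
    have cn: "raag_eq F ((u1 @ u2) @ [(x,c),(x,\<not>c)] @ u3) ((u1 @ u2) @ u3)"
      by (rule raag_eq.cancel)
    have m': "raag_eq F w' ((u1 @ u2) @ [(x,c),(x,\<not>c)] @ u3)"
      using m sp(1) by simp
    have r0: "raag_eq F w' (u1 @ u2 @ u3)" using raag_eq.trans[OF m' cn] by simp
    have "raag_eq F (u1 @ u2 @ u3) g" using raag_eq.trans[OF raag_eq.sym[OF r0] w'(2)] .
    moreover have "u1 @ u2 @ u3 \<in> words_on W" using w'(1) sp(1) by (auto simp: words_on_def)
    ultimately have "length w' \<le> length (u1 @ u2 @ u3)" using w'(3) by blast
    then show False using sp(1) by simp
  qed
  then show ?thesis using w'(2) ny by blast
qed

lemma key:
  assumes sg: "simple_graph W F"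
    and clg: "\<forall>p\<in>raag_supp W F g. \<forall>q\<in>raag_supp W F g. p \<noteq> q \<longrightarrow> (p, q) \<in> F"
    and clh: "\<forall>p\<in>raag_supp W F h. \<forall>q\<in>raag_supp W F h. p \<noteq> q \<longrightarrow> (p, q) \<in> F"
    and c: "raag_eq F (g @ h) (h @ g)"
    and x: "x \<in> raag_supp W F g" and y: "y \<in> raag_supp W F h" and xy: "x \<noteq> y"
  shows "(x, y) \<in> F"
proof (rule ccontr)
  assume n: "(x,y) \<notin> F"
  have sF: "sym F" using sg by (simp add: simple_graph_def)
  have n2: "(y,x) \<notin> F" using n sF by (meson symD)
  from key_one[OF x clg xy[symmetric] n] obtain w1 where
    w1: "raag_eq F w1 g" "y \<notin> fst ` set w1" "ex x w1 \<noteq> 0" by blast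
  from key_one[OF y clh xy n2] obtain w2 where
    w2: "raag_eq F w2 h" "x \<notin> fst ` set w2" "ex y w2 \<noteq> 0" by blast
  have eg: "ev x y g = (1, 2 * ex x w1, 0, 1)"
    using ev_inv[OF xy n n2 w1(1)] ev_noy[OF w1(2) xy] by simp
  have eh: "ev x y h = (1, 0, 2 * ex y w2, 1)"
    using ev_inv[OF xy n n2 w2(1)] ev_nox[OF w2(2) xy] by simp
  have "ev x y (g @ h) = ev x y (h @ g)" using ev_inv[OF xy n n2 c] .
  then have "ex x w1 * ex y w2 = 0" by (simp add: ev_append eg eh algebra_simps)
  then show False using w1(3) w2(3) by simp
qed

theorem lemma3p3:
  fixes V1 :: "'a set" and E1 :: "('a \<times> 'a) set"
    and V2 :: "'b set" and E2 :: "('b \<times> 'b) set"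
    and W :: "'c set" and F :: "('c \<times> 'c) set"
    and \<psi> :: "('a + 'b) \<Rightarrow> 'c word"
    and \<iota>1 :: "'a \<Rightarrow> 'c" and \<iota>2 :: "'b \<Rightarrow> 'c"
  assumes "finite V1" "simple_graph V1 E1" "irreducible_graph V1 E1" "card V1 \<ge> 2"
    and "finite V2" "simple_graph V2 E2"
    and "finite W" "simple_graph W F"
    and "raag_hom_injective (join_vertices V1 V2) (join_edges V1 E1 V2 E2) W F \<psi>"
    and "KK (join_vertices V1 V2) W F \<psi>"
    and "full_embedding V1 E1 W F \<iota>1" "\<iota>1 ` V1 \<subseteq> hom_supp V1 W F (\<psi> \<circ> Inl)"
    and "full_embedding V2 E2 W F \<iota>2" "\<iota>2 ` V2 \<subseteq> hom_supp V2 W F (\<psi> \<circ> Inr)"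
  shows "full_embedding (join_vertices V1 V2) (join_edges V1 E1 V2 E2) W F (case_sum \<iota>1 \<iota>2)
         \<and> case_sum \<iota>1 \<iota>2 ` join_vertices V1 V2 \<subseteq> hom_supp (join_vertices V1 V2) W F \<psi>"
proof -
  have sF: "sym F" using assms(8) by (simp add: simple_graph_def)
  have hom: "raag_hom (join_vertices V1 V2) (join_edges V1 E1 V2 E2) W F \<psi>"
    using assms(9) by (simp add: raag_hom_injective_def)
  have C: "(\<iota>1 a, \<iota>2 b) \<in> F" if ab: "a \<in> V1" "b \<in> V2" "\<iota>1 a \<noteq> \<iota>2 b" for a b
  proof -
    obtain u where u: "u \<in> V1" "\<iota>1 a \<in> raag_supp W F (\<psi> (Inl u))"
      using assms(12) ab by (auto simp: hom_supp_def)
    obtain w where w: "w \<in> V2" "\<iota>2 b \<in> raag_supp W F (\<psi> (Inr w))"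
      using assms(14) ab by (auto simp: hom_supp_def)
    have uj: "Inl u \<in> join_vertices V1 V2" "Inr w \<in> join_vertices V1 V2"
      using u w by (auto simp: join_vertices_def)
    have ej: "(Inl u, Inr w) \<in> join_edges V1 E1 V2 E2"
      using u w by (auto simp: join_edges_def)
    have c: "raag_eq F (\<psi> (Inl u) @ \<psi> (Inr w)) (\<psi> (Inr w) @ \<psi> (Inl u))"
      using hom uj ej by (simp add: raag_hom_def)
    show ?thesis
      using key[OF assms(8) _ _ c u(2) w(2) ab(3)] assms(10) uj by (simp add: KK_def)
  qed
  have D: "\<iota>1 a \<noteq> \<iota>2 b" if ab: "a \<in> V1" "b \<in> V2" for a b
  proof
    assume eq: "\<iota>1 a = \<iota>2 b"
    have "\<exists>a'\<in>V1. a' \<noteq> a \<and> (a,a') \<notin> E1"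
    proof (rule ccontr)
      assume "\<not> ?thesis"
      then have all: "\<forall>a'\<in>V1 - {a}. (a,a') \<in> E1" by auto
      have "V1 - {a} \<noteq> {}"
      proof
        assume "V1 - {a} = {}"
        then have "V1 \<subseteq> {a}" by auto
        then have "card V1 \<le> card {a}" by (intro card_mono) auto
        then have "card V1 \<le> 1" by simp
        then show False using assms(4) by simp
      qed
      moreover have "{a} \<union> (V1 - {a}) = V1" "{a} \<inter> (V1 - {a}) = {}" using ab by auto
      ultimately show False using assms(3) all unfolding irreducible_graph_def
        by (metis empty_not_insert singletonD)
    qed
    then obtain a' where a': "a' \<in> V1" "a' \<noteq> a" "(a,a') \<notin> E1" by blast
    have ne: "\<iota>1 a' \<noteq> \<iota>1 a" using assms(11) a' ab by (auto simp: full_embedding_def inj_on_def)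
    have nf: "(\<iota>1 a, \<iota>1 a') \<notin> F" using assms(11) a' ab by (auto simp: full_embedding_def)
    have "(\<iota>1 a', \<iota>2 b) \<in> F" using C[OF a'(1) ab(2)] ne eq by simp
    then have "(\<iota>1 a, \<iota>1 a') \<in> F" using eq sF by (metis symD)
    then show False using nf by simp
  qed
  have fe: "full_embedding (join_vertices V1 V2) (join_edges V1 E1 V2 E2) W F (case_sum \<iota>1 \<iota>2)"
    unfolding full_embedding_def
  proof (intro conjI)
    show "inj_on (case_sum \<iota>1 \<iota>2) (join_vertices V1 V2)"
    proof (rule inj_onI)
      fix u v assume uv: "u \<in> join_vertices V1 V2" "v \<in> join_vertices V1 V2"
        "case_sum \<iota>1 \<iota>2 u = case_sum \<iota>1 \<iota>2 v"
      show "u = v"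
      proof (cases u; cases v)
        fix a a' assume "u = Inl a" "v = Inl a'"
        then show ?thesis using uv assms(11) by (auto simp: join_vertices_def full_embedding_def inj_on_def)
      next
        fix a b assume "u = Inl a" "v = Inr b"
        then show ?thesis using uv D by (auto simp: join_vertices_def)
      next
        fix a b assume "u = Inr b" "v = Inl a"
        then show ?thesis using uv D by (fastforce simp: join_vertices_def)
      next
        fix b b' assume "u = Inr b" "v = Inr b'"
        then show ?thesis using uv assms(13) by (auto simp: join_vertices_def full_embedding_def inj_on_def)
      qed
    qed
    show "case_sum \<iota>1 \<iota>2 ` join_vertices V1 V2 \<subseteq> W"
      using assms(11,13) unfolding full_embedding_def join_vertices_def by auto
    show "\<forall>u\<in>join_vertices V1 V2. \<forall>v\<in>join_vertices V1 V2.
      ((u, v) \<in> join_edges V1 E1 V2 E2) = ((case_sum \<iota>1 \<iota>2 u, case_sum \<iota>1 \<iota>2 v) \<in> F)"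
    proof (intro ballI)
      fix u v assume uv: "u \<in> join_vertices V1 V2" "v \<in> join_vertices V1 V2"
      show "((u, v) \<in> join_edges V1 E1 V2 E2) = ((case_sum \<iota>1 \<iota>2 u, case_sum \<iota>1 \<iota>2 v) \<in> F)"
      proof (cases u; cases v)
        fix a a' assume "u = Inl a" "v = Inl a'"
        then show ?thesis using uv assms(11) by (auto simp: join_edges_def join_vertices_def full_embedding_def)
      next
        fix a b assume "u = Inl a" "v = Inr b"
        then show ?thesis using uv C D by (auto simp: join_edges_def join_vertices_def)
      next
        fix a b assume "u = Inr b" "v = Inl a"
        then show ?thesis using uv C D sF by (auto simp: join_edges_def join_vertices_def dest: symD) (meson symD)
      next
        fix b b' assume "u = Inr b" "v = Inr b'"
        then show ?thesis using uv assms(13) by (auto simp: join_edges_def join_vertices_def full_embedding_def)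
      qed
    qed
  qed
  have "case_sum \<iota>1 \<iota>2 ` join_vertices V1 V2 \<subseteq> hom_supp (join_vertices V1 V2) W F \<psi>"
    using assms(12,14) unfolding hom_supp_def join_vertices_def by force
  with fe show ?thesis by blast
qed

end
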